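(* Let $m\ge 11$ be odd and let $t_1\ge 2$ be an integer with $3t_1\le m-4$ and $m-3t_1$ even. Then $\rho(F_0(t_1,\tfrac{m-3t_1}{2},0))<\rho(F_0(1,\tfrac{m-3}{2},0))$, where $\rho(F_0(1,\frac{m-3}{2},0))$ is the largest root of $x^4-x^3+(1-m)x^2+(m-3)x+m-3=0$ and $\rho(F_0(t_1,\frac{m-3t_1}{2},0))$ is the largest root of $x^4-x^3+(t_1-m)x^2+(m-3t_1)x-3t_1^2+mt_1=0$.
   Context: $\rho(G)$ denotes the largest eigenvalue of the adjacency matrix of $G$. For integers $t_1\ge0$, $t_2\ge 1$, the graph $F_0(t_1,t_2,0)$ consists of a central vertex $u^*$, $t_1$ triangles $u^*a_ib_i$ ($i=1,\dots,t_1$) sharing only $u^*$, and further vertices $v,u_1,\dots,u_{t_2}$ with each $u_j$ adjacent to both $u^*$ and $v$; there are no other vertices or edges. It has $3t_1+2t_2$ edges. In particular $F_0(1,t_2,0)$ is $K_{2,t_2}$ with a triangle attached at a vertex of maximum degree. *)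

theory Defs
  imports "Jordan_Normal_Form.Char_Poly"
begin

text \<open>Vertices of F_0(t1,t2,0) are 0..<F0_card t1 t2:
  u* = 0; a_i = 2i-1, b_i = 2i (1 <= i <= t1); v = 2 t1 + 1; u_j = 2 t1 + 1 + j (1 <= j <= t2).\<close>

definition F0_card :: "nat \<Rightarrow> nat \<Rightarrow> nat" where
  "F0_card t1 t2 = 2 * t1 + t2 + 2"

definition F0_edges :: "nat \<Rightarrow> nat \<Rightarrow> (nat \<times> nat) set" where
  "F0_edges t1 t2 =
     (\<Union>i\<in>{1..t1}. {(0, 2*i-1), (0, 2*i), (2*i-1, 2*i)}) \<union>
     (\<Union>j\<in>{1..t2}. {(0, 2*t1+1+j), (2*t1+1, 2*t1+1+j)})"

definition F0_adj :: "nat \<Rightarrow> nat \<Rightarrow> nat \<Rightarrow> nat \<Rightarrow> bool" where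
  "F0_adj t1 t2 x y \<longleftrightarrow> (x, y) \<in> F0_edges t1 t2 \<or> (y, x) \<in> F0_edges t1 t2"

definition adj_matrix_F0 :: "nat \<Rightarrow> nat \<Rightarrow> real mat" where
  "adj_matrix_F0 t1 t2 =
     mat (F0_card t1 t2) (F0_card t1 t2) (\<lambda>(x, y). if F0_adj t1 t2 x y then 1 else 0)"

definition rho :: "real mat \<Rightarrow> real" where
  "rho A = Max {x. eigenvalue A x}"

definition largest_root :: "(real \<Rightarrow> real) \<Rightarrow> real" where
  "largest_root f = Max {x. f x = 0}"

end

theory Submission
  imports Defs
begin

lemma edges_mem: "(x,y) \<in> F0_edges t1 t2 \<longleftrightarrow>
  (\<exists>i. 1\<le>i \<and> i\<le>t1 \<and> ((x=0\<and>y=2*i-1) \<or> (x=0\<and>y=2*i) \<or> (x=2*i-1\<and>y=2*i))) \<or>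
  (\<exists>j. 1\<le>j \<and> j\<le>t2 \<and> ((x=0 \<and> y=2*t1+1+j) \<or> (x=2*t1+1 \<and> y=2*t1+1+j)))"
  unfolding F0_edges_def by auto

lemma odd_ne_even[simp]: "Suc (2*a) \<noteq> 2*(b::nat)" "2*(b::nat) \<noteq> Suc (2*a)" by presburger+

lemma even_ne_oddm[simp]: "Suc (Suc (2*p)) \<noteq> 2*(i::nat) - Suc 0" "2*(i::nat) - Suc 0 \<noteq> Suc (Suc (2*p))" by presburger+

lemma ex_half: "(\<exists>i::nat. 1\<le>i \<and> i\<le>t \<and> (y=2*i-1 \<or> y=2*i)) \<longleftrightarrow> 1 \<le> y \<and> y \<le> 2*t"
proof
  assume "1 \<le> y \<and> y \<le> 2*t" thus "\<exists>i::nat. 1\<le>i \<and> i\<le>t \<and> (y=2*i-1 \<or> y=2*i)"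
    by (intro exI[of _ "(y+1) div 2"]) presburger
qed auto

lemma adj0: "F0_adj t1 t2 0 y \<longleftrightarrow> (1\<le>y \<and> y\<le>2*t1) \<or> (2*t1+2 \<le> y \<and> y \<le> 2*t1+1+t2)"
proof -
  have "F0_adj t1 t2 0 y \<longleftrightarrow> (\<exists>i::nat. 1\<le>i \<and> i\<le>t1 \<and> (y=2*i-1 \<or> y=2*i)) \<or> (\<exists>j. 1\<le>j \<and> j\<le>t2 \<and> y=2*t1+1+j)"
    unfolding F0_adj_def edges_mem by auto
  also have "\<dots> \<longleftrightarrow> (1\<le>y \<and> y\<le>2*t1) \<or> (2*t1+2 \<le> y \<and> y \<le> 2*t1+1+t2)"
    unfolding ex_half by (auto intro!: exI[of _ "y - (2*t1+1)"])
  finally show ?thesis .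
qed

lemma adj_odd: assumes "1 \<le> i" "i \<le> t1"
  shows "F0_adj t1 t2 (2*i-1) y \<longleftrightarrow> y = 0 \<or> y = 2*i"
proof -
  obtain p where p: "i = Suc p" using assms(1) by (cases i) auto
  have "F0_adj t1 t2 (Suc(2*p)) y \<longleftrightarrow> y=0 \<or> y=Suc(Suc(2*p))"
    using assms unfolding p F0_adj_def edges_mem by auto
  thus ?thesis unfolding p by simp
qed

lemma adj_even: assumes "1 \<le> i" "i \<le> t1"
  shows "F0_adj t1 t2 (2*i) y \<longleftrightarrow> y = 0 \<or> y = 2*i-1"
proof -
  obtain p where p: "i = Suc p" using assms(1) by (cases i) auto
  have "F0_adj t1 t2 (Suc(Suc(2*p))) y \<longleftrightarrow> y=0 \<or> y=Suc(2*p)"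
    using assms unfolding p F0_adj_def edges_mem by auto
  thus ?thesis unfolding p by simp
qed

lemma adj_v: "F0_adj t1 t2 (2*t1+1) y \<longleftrightarrow> 2*t1+2 \<le> y \<and> y \<le> 2*t1+1+t2"
  unfolding F0_adj_def edges_mem by (auto intro!: exI[of _ "y - (2*t1+1)"])

lemma adj_u: assumes "1 \<le> j" "j \<le> t2"
  shows "F0_adj t1 t2 (2*t1+1+j) y \<longleftrightarrow> y = 0 \<or> y = 2*t1+1"
  using assms unfolding F0_adj_def edges_mem by auto

lemma A_carrier: "adj_matrix_F0 t1 t2 \<in> carrier_mat (F0_card t1 t2) (F0_card t1 t2)"
  unfolding adj_matrix_F0_def by simp

lemma mv: assumes "v \<in> carrier_vec (F0_card t1 t2)" "k < F0_card t1 t2"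
  shows "(adj_matrix_F0 t1 t2 *\<^sub>v v) $ k = (\<Sum>j\<in>{j. j < F0_card t1 t2 \<and> F0_adj t1 t2 k j}. v $ j)"
proof -
  have "(adj_matrix_F0 t1 t2 *\<^sub>v v) $ k = (\<Sum>j\<in>{0..<F0_card t1 t2}. (if F0_adj t1 t2 k j then 1 else 0) * v $ j)"
    using assms unfolding adj_matrix_F0_def by (simp add: scalar_prod_def)
  also have "\<dots> = (\<Sum>j\<in>{0..<F0_card t1 t2}. if F0_adj t1 t2 k j then v $ j else 0)"
    by (rule sum.cong) auto
  also have "\<dots> = (\<Sum>j\<in>{j\<in>{0..<F0_card t1 t2}. F0_adj t1 t2 k j}. v $ j)"
    by (rule sum.inter_filter[symmetric]) simp
  also have "{j\<in>{0..<F0_card t1 t2}. F0_adj t1 t2 k j} = {j. j < F0_card t1 t2 \<and> F0_adj t1 t2 k j}" by auto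
  finally show ?thesis .
qed

lemma N0: "{j. j < F0_card t1 t2 \<and> F0_adj t1 t2 0 j} = {1..2*t1} \<union> {2*t1+2..2*t1+1+t2}"
  unfolding adj0 F0_card_def by auto
lemma Nodd: assumes i: "1 \<le> i" "i \<le> t1" shows "{j. j < F0_card t1 t2 \<and> F0_adj t1 t2 (2*i-1) j} = {0, 2*i}"
proof -
  have h: "\<And>y. F0_adj t1 t2 (2*i-1) y \<longleftrightarrow> y = 0 \<or> y = 2*i" using adj_odd[OF i] .
  show ?thesis unfolding h using i by (auto simp: F0_card_def)
qed
lemma Neven: assumes i: "1 \<le> i" "i \<le> t1" shows "{j. j < F0_card t1 t2 \<and> F0_adj t1 t2 (2*i) j} = {0, 2*i-1}"
proof -
  have h: "\<And>y. F0_adj t1 t2 (2*i) y \<longleftrightarrow> y = 0 \<or> y = 2*i-1" using adj_even[OF i] .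
  show ?thesis unfolding h using i by (auto simp: F0_card_def)
qed
lemma Nv: "{j. j < F0_card t1 t2 \<and> F0_adj t1 t2 (2*t1+1) j} = {2*t1+2..2*t1+1+t2}"
  unfolding adj_v by (auto simp: F0_card_def)
lemma Nu: assumes j: "1 \<le> j" "j \<le> t2" shows "{y. y < F0_card t1 t2 \<and> F0_adj t1 t2 (2*t1+1+j) y} = {0, 2*t1+1}"
proof -
  have h: "\<And>y. F0_adj t1 t2 (2*t1+1+j) y \<longleftrightarrow> y = 0 \<or> y = 2*t1+1" using adj_u[OF j] .
  show ?thesis unfolding h using j by (auto simp: F0_card_def)
qed

lemma idx_cases: assumes "k < F0_card t1 t2"
  obtains "k = 0" | i where "1 \<le> i" "i \<le> t1" "k = 2*i-1" | i where "1 \<le> i" "i \<le> t1" "k = 2*i"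
   | "k = 2*t1+1" | j where "1 \<le> j" "j \<le> t2" "k = 2*t1+1+j"
proof -
  consider "k = 0" | "1 \<le> k \<and> k \<le> 2*t1" | "k = 2*t1+1" | "2*t1+2 \<le> k \<and> k \<le> 2*t1+1+t2"
    using assms unfolding F0_card_def by linarith
  then show ?thesis
  proof cases
    case 1 show ?thesis by (rule that(1)) (rule 1)
  next
    case 2
    have "\<exists>i. 1\<le>i \<and> i\<le>t1 \<and> (k=2*i-1 \<or> k=2*i)" using ex_half[of t1 k] 2 by simp
    then obtain i where i: "1\<le>i" "i\<le>t1" "k=2*i-1 \<or> k=2*i" by blast
    show ?thesis
    proof (cases "k=2*i-1")
      case True show ?thesis by (rule that(2)[of i]) (use i True in simp_all)
    next
      case False show ?thesis by (rule that(3)[of i]) (use i False in simp_all)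
    qed
  next
    case 3 show ?thesis by (rule that(4)) (rule 3)
  next
    case 4 show ?thesis by (rule that(5)[of "k - (2*t1+1)"]) (use 4 in auto)
  qed
qed

definition Q :: "nat \<Rightarrow> nat \<Rightarrow> real \<Rightarrow> real" where
  "Q t1 t2 x = x^4 - x^3 - 2*(real t1 + real t2)*x^2 + 2*real t2*x + 2*real t1*real t2"

lemma sum_blk1: assumes "\<And>k. 1 \<le> k \<Longrightarrow> k \<le> 2*t1 \<Longrightarrow> f k = (b::real)"
  shows "(\<Sum>k\<in>{1..2*t1}. f k) = 2 * real t1 * b"
proof -
  have "(\<Sum>k\<in>{1..2*t1}. f k) = (\<Sum>k\<in>{1..2*t1}. b)" using assms by (intro sum.cong) auto
  thus ?thesis by simp
qed

lemma sum_blk2: assumes "\<And>k. 2*t1+2 \<le> k \<Longrightarrow> k \<le> 2*t1+1+t2 \<Longrightarrow> f k = (b::real)"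
  shows "(\<Sum>k\<in>{2*t1+2..2*t1+1+t2}. f k) = real t2 * b"
proof -
  have "(\<Sum>k\<in>{2*t1+2..2*t1+1+t2}. f k) = (\<Sum>k\<in>{2*t1+2..2*t1+1+t2}. b)" using assms by (intro sum.cong) auto
  also have "card {2*t1+2..2*t1+1+t2} = t2" by simp
  ultimately show ?thesis by simp
qed

lemma sum_N0: "(\<Sum>j\<in>{j. j < F0_card t1 t2 \<and> F0_adj t1 t2 0 j}. f j) =
   (\<Sum>k\<in>{1..2*t1}. f k) + (\<Sum>k\<in>{2*t1+2..2*t1+1+t2}. (f k :: real))"
  unfolding N0 by (rule sum.union_disjoint) auto

lemma ev_root:
  assumes ev: "eigenvalue (adj_matrix_F0 t1 t2) l" and l1: "l > 1" and t2: "t2 \<ge> 1"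
  shows "Q t1 t2 l = 0"
proof -
  let ?n = "F0_card t1 t2"
  let ?N = "\<lambda>k. {j. j < F0_card t1 t2 \<and> F0_adj t1 t2 k j}"
  obtain v where v: "v \<in> carrier_vec ?n" "v \<noteq> 0\<^sub>v ?n" "adj_matrix_F0 t1 t2 *\<^sub>v v = l \<cdot>\<^sub>v v"
    using ev unfolding eigenvalue_def eigenvector_def using A_carrier[of t1 t2] by auto
  have eq: "(\<Sum>j\<in>?N k. v $ j) = l * v $ k" if "k < ?n" for k
  proof -
    have "(adj_matrix_F0 t1 t2 *\<^sub>v v) $ k = (l \<cdot>\<^sub>v v) $ k" using v(3) by simp
    thus ?thesis using mv[OF v(1) that] v(1) that by simp
  qed
  define a where "a = v $ 0"
  define c where "c = v $ (2*t1+1)"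
  have tri: "v $ (2*i-1) = a/(l-1) \<and> v $ (2*i) = a/(l-1)" if i: "1 \<le> i" "i \<le> t1" for i
  proof -
    have lt: "2*i-1 < ?n" "2*i < ?n" using i unfolding F0_card_def by auto
    have e1: "a + v$(2*i) = l * v$(2*i-1)" using eq[OF lt(1)] i unfolding Nodd[OF i] a_def by simp
    have e2: "a + v$(2*i-1) = l * v$(2*i)" using eq[OF lt(2)] i unfolding Neven[OF i] a_def by simp
    have "(l+1) * (v$(2*i-1) - v$(2*i)) = 0" using e1 e2 by (simp add: algebra_simps)
    hence same: "v$(2*i-1) = v$(2*i)" using l1 by simp
    hence "(l-1) * v$(2*i) = a" using e2 by (simp add: algebra_simps)
    hence "v$(2*i) = a/(l-1)" using l1 by (simp add: field_simps)
    thus ?thesis using same by simp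
  qed
  have blk1: "v $ k = a/(l-1)" if "1 \<le> k" "k \<le> 2*t1" for k
  proof -
    have "\<exists>i. 1\<le>i \<and> i\<le>t1 \<and> (k=2*i-1 \<or> k=2*i)" using ex_half[of t1 k] that by simp
    then obtain i where "1\<le>i" "i\<le>t1" "k=2*i-1 \<or> k=2*i" by blast
    thus ?thesis using tri[of i] by auto
  qed
  have uu: "v $ (2*t1+1+j) = (a+c)/l" if j: "1 \<le> j" "j \<le> t2" for j
  proof -
    have lt: "2*t1+1+j < ?n" using j unfolding F0_card_def by auto
    have "a + c = l * v$(2*t1+1+j)" using eq[OF lt] unfolding Nu[OF j] a_def c_def by simp
    thus ?thesis using l1 by (simp add: field_simps)
  qed
  have blk2: "v $ k = (a+c)/l" if "2*t1+2 \<le> k" "k \<le> 2*t1+1+t2" for k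
    using uu[of "k - (2*t1+1)"] that by auto
  have hv: "l * c = real t2 * ((a+c)/l)"
  proof -
    have lt: "2*t1+1 < ?n" unfolding F0_card_def by auto
    have s2: "(\<Sum>k\<in>{2*t1+2..2*t1+1+t2}. v$k) = real t2 * ((a+c)/l)" by (rule sum_blk2) (rule blk2)
    have "(\<Sum>j\<in>?N (2*t1+1). v$j) = l * v$(2*t1+1)" by (rule eq[OF lt])
    hence "(\<Sum>j\<in>{2*t1+2..2*t1+1+t2}. v$j) = l * c" unfolding Nv c_def .
    thus ?thesis using s2 by simp
  qed
  have h0: "l * a = 2 * real t1 * (a/(l-1)) + real t2 * ((a+c)/l)"
  proof -
    have lt: "0 < ?n" unfolding F0_card_def by auto
    have s2: "(\<Sum>k\<in>{2*t1+2..2*t1+1+t2}. v$k) = real t2 * ((a+c)/l)" by (rule sum_blk2) (rule blk2)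
    have s1: "(\<Sum>k\<in>{1..2*t1}. v$k) = 2 * real t1 * (a/(l-1))" by (rule sum_blk1) (rule blk1)
    have "(\<Sum>j\<in>?N 0. v$j) = l * v$0" by (rule eq[OF lt])
    hence "(\<Sum>k\<in>{1..2*t1}. v$k) + (\<Sum>k\<in>{2*t1+2..2*t1+1+t2}. v$k) = l * a" unfolding sum_N0 a_def .
    thus ?thesis unfolding s1 s2 by simp
  qed
  have hc: "c * (l^2 - t2) = t2 * a" using hv l1 by (simp add: field_simps power2_eq_square)
  have h0': "l^2*(l-1)*a = 2*real t1*l*a + l^2*(l-1)*c"
  proof -
    have "real t2 * ((a+c)/l) = l * c" using hv by simp
    hence "l * a = 2 * real t1 * (a/(l-1)) + l * c" using h0 by simp
    hence "(l-1)*(l*a) = (l-1)*(2*real t1*(a/(l-1))) + (l-1)*(l*c)" by (simp add: distrib_left)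
    also have "(l-1)*(2*real t1*(a/(l-1))) = 2*real t1*a" using l1 by simp
    finally have X: "(l-1)*(l*a) = 2*real t1*a + (l-1)*(l*c)" .
    hence "l*((l-1)*(l*a)) = l*(2*real t1*a + (l-1)*(l*c))" by simp
    thus ?thesis by (simp add: power2_eq_square algebra_simps)
  qed
  have iden: "l*a*Q t1 t2 l = (l^2-t2)*(l^2*(l-1)*a - (2*real t1*l*a + l^2*(l-1)*c))
      + l^2*(l-1)*(c * (l^2 - t2) - t2 * a)"
    unfolding Q_def by (simp add: eval_nat_numeral algebra_simps)
  have la: "l * a * Q t1 t2 l = 0" using iden h0' hc by simp
  have "a \<noteq> 0"
  proof
    assume a0: "a = 0"
    have "l * c = real t2 * (c/l)" using hv a0 by simp
    hence "l*l*c = real t2 * c" using l1 by (simp add: field_simps)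
    moreover have "0 = real t2 * (c/l)" using h0 a0 by simp
    ultimately have c0: "c = 0" using t2 l1 by auto
    have "v = 0\<^sub>v ?n"
    proof (rule eq_vecI)
      show "dim_vec v = dim_vec (0\<^sub>v ?n)" using v(1) by simp
      fix k assume "k < dim_vec (0\<^sub>v ?n)"
      hence k: "k < ?n" by simp
      show "v $ k = 0\<^sub>v ?n $ k"
        using k
      proof (cases rule: idx_cases)
        case 1 thus ?thesis using a0 a_def k by simp
      next
        case (2 i) thus ?thesis using tri[of i] a0 k by simp
      next
        case (3 i) thus ?thesis using tri[of i] a0 k by simp
      next
        case 4 thus ?thesis using c0 c_def k by simp
      next
        case (5 j) thus ?thesis using uu[of j] a0 c0 k by simp
      qed
    qed
    thus False using v(2) by simp
  qed
  thus ?thesis using la l1 by simp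
qed

lemma ev_exists:
  assumes Q0: "Q t1 t2 r = 0" and r1: "r > 1" and rt: "r^2 > real t2"
  shows "eigenvalue (adj_matrix_F0 t1 t2) r"
proof -
  let ?n = "F0_card t1 t2"
  let ?A = "adj_matrix_F0 t1 t2"
  define c where "c = real t2/(r^2 - t2)"
  define w where "w = vec ?n (\<lambda>k. if k=0 then 1 else if k \<le> 2*t1 then 1/(r-1) else if k = 2*t1+1 then c else (1+c)/r)"
  have w: "w \<in> carrier_vec ?n" by (simp add: w_def)
  have w0: "w$0 = 1" by (simp add: w_def F0_card_def)
  have wb1: "w$k = 1/(r-1)" if "1 \<le> k" "k \<le> 2*t1" for k using that by (simp add: w_def F0_card_def)
  have wv: "w$(2*t1+1) = c" by (simp add: w_def F0_card_def)
  have wb2: "w$k = (1+c)/r" if "2*t1+2 \<le> k" "k \<le> 2*t1+1+t2" for k using that by (simp add: w_def F0_card_def)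
  have nz: "r - 1 \<noteq> 0" "r^2 - real t2 \<noteq> 0" "r \<noteq> 0" using r1 rt by auto
  have k1: "real t2 * ((1+c)/r) = r*c" unfolding c_def using nz by (simp add: field_simps power2_eq_square)
  have E: "r*(r-1)*(r^2-t2) = 2*real t1*(r^2-t2) + t2*r*(r-1)"
  proof -
    have "r*(r-1)*(r^2-t2) - (2*real t1*(r^2-t2) + t2*r*(r-1)) = Q t1 t2 r"
      unfolding Q_def by (simp add: eval_nat_numeral algebra_simps)
    thus ?thesis using Q0 by simp
  qed
  have cc: "c*(r^2 - t2) = t2" unfolding c_def using nz by simp
  have M1: "((r-1)*(r^2-t2)) * (2*real t1*(1/(r-1))) = 2*real t1*(r^2-t2)" using nz by simp
  have M2: "((r-1)*(r^2-t2)) * (r*c) = r*(r-1)*(c*(r^2-t2))" by (simp add: algebra_simps)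
  have M: "((r-1)*(r^2-t2)) * (2*real t1*(1/(r-1)) + r*c) = ((r-1)*(r^2-t2)) * r"
    unfolding distrib_left M1 M2 cc using E by (simp add: algebra_simps)
  have "2*real t1*(1/(r-1)) + r*c = r"
    using M nz by (metis mult_left_cancel mult_eq_0_iff)
  hence k0: "2*real t1*(1/(r-1)) + real t2*((1+c)/r) = r" unfolding k1 .
  have eq: "?A *\<^sub>v w = r \<cdot>\<^sub>v w"
  proof (rule eq_vecI)
    show "dim_vec (?A *\<^sub>v w) = dim_vec (r \<cdot>\<^sub>v w)" using w A_carrier[of t1 t2] by simp
    fix k assume "k < dim_vec (r \<cdot>\<^sub>v w)"
    hence k: "k < ?n" using w by simp
    have lhs: "(?A *\<^sub>v w) $ k = (\<Sum>j\<in>{j. j < ?n \<and> F0_adj t1 t2 k j}. w $ j)" by (rule mv[OF w k])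
    have rhs: "(r \<cdot>\<^sub>v w) $ k = r * w$k" using w k by simp
    have goal: "(\<Sum>j\<in>{j. j < ?n \<and> F0_adj t1 t2 k j}. w $ j) = r * w$k" using k
    proof (cases rule: idx_cases)
      case 1
      have s1: "(\<Sum>k\<in>{1..2*t1}. w$k) = 2 * real t1 * (1/(r-1))" by (rule sum_blk1) (rule wb1)
      have s2: "(\<Sum>k\<in>{2*t1+2..2*t1+1+t2}. w$k) = real t2 * ((1+c)/r)" by (rule sum_blk2) (rule wb2)
      show ?thesis unfolding 1 sum_N0 s1 s2 k0 w0 by simp
    next
      case (2 i)
      have a: "w$(2*i-1) = 1/(r-1)" "w$(2*i) = 1/(r-1)" using 2 by (auto intro: wb1)
      have id: "1 + 1/(r-1) = r*(1/(r-1))" using nz by (simp add: field_simps)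
      have sm: "(\<Sum>j\<in>{0,2*i}. w$j) = w$0 + w$(2*i)" using 2 by simp
      show ?thesis unfolding 2 Nodd[OF 2(1,2)] by (simp only: sm a w0 id)
    next
      case (3 i)
      have a: "w$(2*i-1) = 1/(r-1)" "w$(2*i) = 1/(r-1)" using 3 by (auto intro: wb1)
      have id: "1 + 1/(r-1) = r*(1/(r-1))" using nz by (simp add: field_simps)
      have sm: "(\<Sum>j\<in>{0,2*i-1}. w$j) = w$0 + w$(2*i-1)" using 3 by simp
      show ?thesis unfolding 3 Neven[OF 3(1,2)] by (simp only: sm a w0 id)
    next
      case 4
      have s2: "(\<Sum>k\<in>{2*t1+2..2*t1+1+t2}. w$k) = real t2 * ((1+c)/r)" by (rule sum_blk2) (rule wb2)
      show ?thesis unfolding 4 Nv s2 k1 wv ..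
    next
      case (5 j)
      have "w$(2*t1+1+j) = (1+c)/r" using 5 by (intro wb2) auto
      thus ?thesis unfolding 5 Nu[OF 5(1,2)] using nz w0 wv by simp
    qed
    show "(?A *\<^sub>v w) $ k = (r \<cdot>\<^sub>v w) $ k" unfolding lhs rhs goal ..
  qed
  have "w \<noteq> 0\<^sub>v ?n"
  proof
    assume "w = 0\<^sub>v ?n"
    hence "w$0 = 0" by (simp add: F0_card_def)
    thus False using w0 by simp
  qed
  thus ?thesis unfolding eigenvalue_def eigenvector_def using w eq A_carrier[of t1 t2] by auto
qed

lemma Q_big: assumes "y \<ge> 2*(real t1 + real t2) + 2" shows "Q t1 t2 y > 0"
proof -
  have y1: "y - 1 \<ge> 1" "y \<ge> 0" using assms by auto
  have "y*(y-1) \<ge> y*1" using mult_left_mono[OF y1(1) y1(2)] .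
  hence h: "y*y - y \<ge> y" by (simp add: algebra_simps)
  have "y*y > y + 2*(real t1 + real t2)" using h assms by linarith
  hence P: "y^2 - y - 2*(real t1 + real t2) > 0" by (simp add: power2_eq_square)
  have "y^2 > 0" using assms by simp
  hence "y^2 * (y^2 - y - 2*(real t1 + real t2)) > 0" using P by simp
  moreover have "2*real t2*y + 2*real t1*real t2 \<ge> 0" using y1 by simp
  moreover have "Q t1 t2 y = y^2 * (y^2 - y - 2*(real t1 + real t2)) + (2*real t2*y + 2*real t1*real t2)"
    unfolding Q_def by (simp add: eval_nat_numeral algebra_simps)
  ultimately show ?thesis by linarith
qed

lemma Q_cont: "isCont (Q t1 t2) x"
proof -
  have "Q t1 t2 = (\<lambda>x. x^4 - x^3 - 2*(real t1 + real t2)*x^2 + 2*real t2*x + 2*real t1*real t2)"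
    by (rule ext) (simp add: Q_def)
  thus ?thesis by (simp add: continuous_intros)
qed

lemma root_above: assumes "Q t1 t2 x < 0" shows "\<exists>z>x. Q t1 t2 z = 0"
proof -
  define b where "b = max x (2*(real t1 + real t2) + 2)"
  have "Q t1 t2 b > 0" by (rule Q_big) (simp add: b_def)
  then obtain z where z: "x \<le> z" "z \<le> b" "Q t1 t2 z = 0"
    using IVT[of "Q t1 t2" x 0 b] assms Q_cont by (force simp: b_def)
  hence "z \<noteq> x" using assms by auto
  hence "z > x" using z(1) by simp
  thus ?thesis using z(3) by (intro exI[of _ z]) simp
qed

lemma Q_finite: "finite {x. Q t1 t2 x = 0}"
proof -
  define p where "p = [:2*real t1*real t2, 2*real t2, -2*(real t1 + real t2), -1, 1:]"
  have "p \<noteq> 0" by (simp add: p_def)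
  have "\<And>x. poly p x = Q t1 t2 x" by (simp add: p_def Q_def eval_nat_numeral algebra_simps)
  hence "{x. Q t1 t2 x = 0} = {x. poly p x = 0}" by simp
  thus ?thesis using poly_roots_finite[OF \<open>p \<noteq> 0\<close>] by simp
qed

lemma spec:
  assumes t2: "t2 \<ge> 2"
  shows "rho (adj_matrix_F0 t1 t2) = largest_root (Q t1 t2)
    \<and> Q t1 t2 (largest_root (Q t1 t2)) = 0
    \<and> (\<forall>x. Q t1 t2 x < 0 \<longrightarrow> x < largest_root (Q t1 t2))"
proof -
  define R where "R = {x. Q t1 t2 x = 0}"
  define r where "r = Max R"
  have rl: "largest_root (Q t1 t2) = r" unfolding r_def R_def largest_root_def ..
  have fin: "finite R" unfolding R_def by (rule Q_finite)
  define s where "s = sqrt (real t2)"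
  have s2: "s^2 = real t2" unfolding s_def by simp
  have s1: "s > 1" unfolding s_def using t2 by simp
  have "s*1 < s*s" using s1 by (intro mult_strict_left_mono) auto
  hence st: "s < real t2" using s2 by (simp add: power2_eq_square)
  have "Q t1 t2 s = (s^2)^2 - s*s^2 - 2*(real t1 + real t2)*s^2 + 2*real t2*s + 2*real t1*real t2"
    unfolding Q_def by (simp add: eval_nat_numeral algebra_simps)
  also have "\<dots> = real t2 * (s - real t2)" unfolding s2 by (simp add: algebra_simps power2_eq_square)
  finally have Qs: "Q t1 t2 s < 0" using st t2 by (simp add: mult_pos_neg)
  have above: "x < r" if neg: "Q t1 t2 x < 0" for x
  proof -
    obtain z where z: "z > x" "Q t1 t2 z = 0" using root_above[OF neg] by blast
    have "z \<le> r" unfolding r_def using fin z(2) by (simp add: R_def)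
    thus ?thesis using z by simp
  qed
  have "R \<noteq> {}" using root_above[OF Qs] unfolding R_def by auto
  hence rR: "r \<in> R" unfolding r_def using fin by simp
  hence Qr: "Q t1 t2 r = 0" unfolding R_def by simp
  have rs: "r > s" using above[OF Qs] .
  have r1: "r > 1" using rs s1 by simp
  have "r^2 > s^2" using rs s1 by (simp add: power_strict_mono)
  hence r2: "r^2 > real t2" using s2 by simp
  define E where "E = {x. eigenvalue (adj_matrix_F0 t1 t2) x}"
  have cp: "char_poly (adj_matrix_F0 t1 t2) \<noteq> 0"
    using degree_monic_char_poly[OF A_carrier[of t1 t2]] by auto
  have "E \<subseteq> {x. poly (char_poly (adj_matrix_F0 t1 t2)) x = 0}"
    unfolding E_def using eigenvalue_root_char_poly[OF A_carrier[of t1 t2]] by auto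
  hence finE: "finite E" using poly_roots_finite[OF cp] finite_subset by blast
  have rE: "r \<in> E" unfolding E_def using ev_exists[OF Qr r1 r2] by simp
  have leE: "x \<le> r" if "x \<in> E" for x
  proof (cases "x > 1")
    case True
    have "Q t1 t2 x = 0" using ev_root[of t1 t2 x] that True t2 unfolding E_def by simp
    thus ?thesis unfolding r_def using fin by (simp add: R_def)
  next
    case False thus ?thesis using r1 by simp
  qed
  have "rho (adj_matrix_F0 t1 t2) = r" unfolding rho_def E_def[symmetric]
    using finE rE leE by (intro Max_eqI) auto
  thus ?thesis using rl Qr above by simp
qed

theorem mainTheorem11:
  fixes m t1 :: nat
  assumes "m \<ge> 11" and "odd m" and "t1 \<ge> 2" and "3 * t1 \<le> m - 4" and "even (m - 3 * t1)"
  shows "rho (adj_matrix_F0 t1 ((m - 3 * t1) div 2)) < rho (adj_matrix_F0 1 ((m - 3) div 2))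
       \<and> rho (adj_matrix_F0 1 ((m - 3) div 2)) =
           largest_root (\<lambda>x. x^4 - x^3 + (1 - real m) * x^2 + (real m - 3) * x + real m - 3)
       \<and> rho (adj_matrix_F0 t1 ((m - 3 * t1) div 2)) =
           largest_root (\<lambda>x. x^4 - x^3 + (real t1 - real m) * x^2 + (real m - 3 * real t1) * x
                              - 3 * (real t1)^2 + real m * real t1)"
proof -
  define T1 where "T1 = (m - 3) div 2"
  define T where "T = (m - 3 * t1) div 2"
  have e1: "2 * T1 = m - 3" unfolding T1_def using assms(1,2) by presburger
  have "real (2 * T1) = real (m - 3)" using e1 by simp
  also have "real (m - 3) = real m - 3" using assms(1) by (simp add: of_nat_diff)
  finally have rT1: "2 * real T1 = real m - 3" by simp
  have e2: "2 * T = m - 3 * t1" unfolding T_def using assms(5) by simp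
  have "real (2 * T) = real (m - 3 * t1)" using e2 by simp
  also have "real (m - 3 * t1) = real m - 3 * real t1" using assms(1,4) by (simp add: of_nat_diff)
  finally have rT: "2 * real T = real m - 3 * real t1" by simp
  have TT1: "real T1 = (real m - 3)/2" using rT1 by simp
  have TT: "real T = (real m - 3*real t1)/2" using rT by simp
  have T12: "T1 \<ge> 2" using e1 assms(1) by linarith
  have T2: "T \<ge> 2" using e2 assms(1,4) by linarith
  have f1: "(\<lambda>x. x^4 - x^3 + (1 - real m) * x^2 + (real m - 3) * x + real m - 3) = Q 1 T1"
    by (rule ext) (simp add: Q_def TT1 field_simps power2_eq_square)
  have f2: "(\<lambda>x. x^4 - x^3 + (real t1 - real m) * x^2 + (real m - 3 * real t1) * x
                              - 3 * (real t1)^2 + real m * real t1) = Q t1 T"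
    by (rule ext) (simp add: Q_def TT field_simps power2_eq_square)
  note S1 = spec[OF T12, of 1] and S = spec[OF T2, of t1]
  define r1 where "r1 = largest_root (Q 1 T1)"
  define r where "r = largest_root (Q t1 T)"
  have Q13: "Q 1 T1 3 < 0"
  proof -
    have "Q 1 T1 3 = 51 - 5 * real m" unfolding Q_def by (simp add: TT1 field_simps)
    thus ?thesis using assms(1) by simp
  qed
  have r13: "r1 > 3" unfolding r1_def using S1 Q13 by blast
  have Qr: "Q t1 T r = 0" unfolding r_def using S by blast
  have "r < r1"
  proof (rule ccontr)
    assume "\<not> r < r1"
    hence rr: "r \<ge> r1" by simp
    have nn: "Q 1 T1 r \<ge> 0"
    proof (rule ccontr)
      assume "\<not> Q 1 T1 r \<ge> 0"
      hence "r < r1" unfolding r1_def using S1 by auto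
      thus False using rr by simp
    qed
    have diff: "Q t1 T r = Q 1 T1 r + (real t1 - 1) * (r*(r-3) + (real m - 3*real t1 - 3))"
      unfolding Q_def by (simp add: TT TT1 field_simps power2_eq_square)
    have "r*(r-3) \<ge> 0" using rr r13 by simp
    moreover have "real m - 3*real t1 - 3 \<ge> 1"
    proof -
      have "3*t1 + 4 \<le> m" using assms(1,4) by linarith
      hence "3*real t1 + 4 \<le> real m" by linarith
      thus ?thesis by simp
    qed
    ultimately have "(real t1 - 1) * (r*(r-3) + (real m - 3*real t1 - 3)) > 0"
      using assms(3) by (intro mult_pos_pos) auto
    hence "Q t1 T r > 0" using diff nn by linarith
    thus False using Qr by simp
  qed
  thus ?thesis unfolding f1 f2 using S S1 unfolding T1_def[symmetric] T_def[symmetric] r_def r1_def by simp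
qed

end
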